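(* Let $\mathcal{G}$ be a directed graph consisting of a single cycle over $k+1$ nodes indexed $0,1,\dots,k$, with edges $\ell_1,\dots,\ell_{k+1}$ where $\ell_i$ joins nodes $i-1$ and $i$ for $i=1,\dots,k$ and $\ell_{k+1}$ joins nodes $k$ and $0$ (each edge carries an arbitrary orientation). Each edge is either a lossy pipe $\ell=(m,n)$ with parameter $a_\ell>0$, or a compressor $\ell=(m,n)$ with ratio $\alpha_\ell>0$; assume at least one edge is a lossy pipe. Let $\mathbf{n}\in\{\pm1\}^{k+1}$ be the cycle indicator vector for the cycle direction $0\to1\to\dots\to k\to 0$: $n_i=+1$ if the orientation of $\ell_i$ agrees with this direction and $n_i=-1$ otherwise. Say a pair $(\boldsymbol{\phi},\boldsymbol{\psi})\in\mathbb{R}^{k+1}\times\mathbb{R}^{k+1}$ is admissible if $\psi_m-\psi_n=a_\ell\,\mathrm{sign}(\phi_\ell)\phi_\ell^2$ for every lossy pipe $\ell=(m,n)$, $\psi_j\ge 0$ for every node $j$, and $\psi_n=\alpha_\ell\psi_m$, $\phi_\ell\ge0$ for every compressor $\ell=(m,n)$. Suppose $(\boldsymbol{\phi},\boldsymbol{\psi})$ and $(\tilde{\boldsymbol{\phi}},\tilde{\boldsymbol{\psi}})$ are admissible with $\psi_0=\tilde{\psi}_0$ and $\tilde{\boldsymbol{\phi}}\neq\boldsymbol{\phi}$. Then it is neither the case that $\mathrm{sign}(\tilde{\boldsymbol{\phi}}-\boldsymbol{\phi})\odot\mathbf{n}<\mathbf{0}$ entrywise, nor the case that $\mathrm{sign}(\tilde{\boldsymbol{\phi}}-\boldsymbol{\phi})\odot\mathbf{n}>\mathbf{0}$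 entrywise.
   Context: $\mathrm{sign}$ is applied entrywise, with $\mathrm{sign}(x)=+1$ for $x>0$, $-1$ for $x<0$, $0$ for $x=0$; $\odot$ denotes entrywise product of vectors. *)

theory Defs
  imports Complex_Main
begin

text \<open>Cycle graph on nodes 0..k with edges indexed 1..k+1.
  Edge i (1 \<le> i \<le> k) joins nodes i-1 and i; edge k+1 joins nodes k and 0.
  The cycle direction 0 -> 1 -> ... -> k -> 0 traverses edge i from
  cyc_src k i to cyc_dst k i.  fwd i says whether the orientation of edge i
  agrees with the cycle direction.\<close>

definition cyc_src :: "nat \<Rightarrow> nat \<Rightarrow> nat" where
  "cyc_src k i = i - 1"

definition cyc_dst :: "nat \<Rightarrow> nat \<Rightarrow> nat" where
  "cyc_dst k i = (if i \<le> k then i else 0)"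

definition tail :: "nat \<Rightarrow> (nat \<Rightarrow> bool) \<Rightarrow> nat \<Rightarrow> nat" where
  "tail k fwd i = (if fwd i then cyc_src k i else cyc_dst k i)"

definition head :: "nat \<Rightarrow> (nat \<Rightarrow> bool) \<Rightarrow> nat \<Rightarrow> nat" where
  "head k fwd i = (if fwd i then cyc_dst k i else cyc_src k i)"

definition cyc_ind :: "(nat \<Rightarrow> bool) \<Rightarrow> nat \<Rightarrow> real" where
  "cyc_ind fwd i = (if fwd i then 1 else -1)"

text \<open>pipe i: edge i is a lossy pipe (parameter c i = a_i), otherwise a
  compressor (ratio c i = alpha_i).  phi indexed by edges 1..k+1,
  psi by nodes 0..k.\<close>
definition admissible ::
  "nat \<Rightarrow> (nat \<Rightarrow> bool) \<Rightarrow> (nat \<Rightarrow> bool) \<Rightarrow> (nat \<Rightarrow> real)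
    \<Rightarrow> (nat \<Rightarrow> real) \<Rightarrow> (nat \<Rightarrow> real) \<Rightarrow> bool" where
  "admissible k fwd pipe c phi psi \<longleftrightarrow>
     (\<forall>i\<in>{1..k+1}. pipe i \<longrightarrow>
        psi (tail k fwd i) - psi (head k fwd i) = c i * sgn (phi i) * (phi i)\<^sup>2) \<and>
     (\<forall>j\<in>{0..k}. psi j \<ge> 0) \<and>
     (\<forall>i\<in>{1..k+1}. \<not> pipe i \<longrightarrow>
        psi (head k fwd i) = c i * psi (tail k fwd i) \<and> phi i \<ge> 0)"

end

theory Submission
  imports Defs
begin

lemma xabs_mono:
  fixes x y c :: real
  assumes "x < y" "c > 0"
  shows "c * sgn x * x\<^sup>2 < c * sgn y * y\<^sup>2"
proof -
  have "sgn x * x\<^sup>2 < sgn y * y\<^sup>2"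
  proof (cases "x \<ge> 0")
    case True
    then have "x\<^sup>2 < y\<^sup>2" using assms by (simp add: power_strict_mono)
    then show ?thesis using True assms by (auto simp: sgn_if)
  next
    case False
    show ?thesis
    proof (cases "y \<ge> 0")
      case True
      have "0 < x\<^sup>2" using False by simp
      moreover have "0 \<le> y\<^sup>2" by simp
      moreover have "sgn x * x\<^sup>2 = - x\<^sup>2" using False by simp
      moreover have "sgn y \<ge> 0" using True by (simp add: sgn_if)
      moreover have "sgn y * y\<^sup>2 \<ge> 0" using True by (simp add: sgn_if)
      ultimately show ?thesis by linarith
    next
      case F2: False
      have "(-y)\<^sup>2 < (-x)\<^sup>2" using F2 assms by (intro power_strict_mono) auto
      then show ?thesis using False F2 by (auto simp: sgn_if)
    qed
  qed
  then show ?thesis using assms by simp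
qed

lemma edge_step:
  assumes c: "c i > 0" and i: "i \<in> {1..k+1}"
    and A: "admissible k fwd pipe c phi psi"
    and B: "admissible k fwd pipe c phi' psi'"
    and s: "sgn (phi' i - phi i) * cyc_ind fwd i > 0"
  shows "(pipe i \<longrightarrow> psi' (cyc_dst k i) - psi (cyc_dst k i) < psi' (i-1) - psi (i-1))
    \<and> (\<not> pipe i \<longrightarrow> (psi' (i-1) - psi (i-1) \<le> 0 \<longrightarrow> psi' (cyc_dst k i) - psi (cyc_dst k i) \<le> 0)
        \<and> (psi' (i-1) - psi (i-1) < 0 \<longrightarrow> psi' (cyc_dst k i) - psi (cyc_dst k i) < 0))"
proof (cases "fwd i")
  case True
  then have lt: "phi i < phi' i" using s by (auto simp: cyc_ind_def sgn_if split: if_splits)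
  have tl: "tail k fwd i = i - 1" "head k fwd i = cyc_dst k i"
    using True by (auto simp: tail_def head_def cyc_src_def)
  show ?thesis
  proof (intro conjI impI)
    assume p: "pipe i"
    have "psi (i-1) - psi (cyc_dst k i) = c i * sgn (phi i) * (phi i)\<^sup>2"
         "psi' (i-1) - psi' (cyc_dst k i) = c i * sgn (phi' i) * (phi' i)\<^sup>2"
      using A B p i tl unfolding admissible_def by auto
    with xabs_mono[OF lt c] show "psi' (cyc_dst k i) - psi (cyc_dst k i) < psi' (i-1) - psi (i-1)"
      by linarith
  next
    assume p: "\<not> pipe i"
    have "psi (cyc_dst k i) = c i * psi (i-1)" "psi' (cyc_dst k i) = c i * psi' (i-1)"
      using A B p i tl unfolding admissible_def by auto
    then have e: "psi' (cyc_dst k i) - psi (cyc_dst k i) = c i * (psi' (i-1) - psi (i-1))"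
      by (simp add: right_diff_distrib)
    { assume "psi' (i-1) - psi (i-1) \<le> 0"
      then show "psi' (cyc_dst k i) - psi (cyc_dst k i) \<le> 0" using e c
        by (simp add: mult_nonneg_nonpos) }
    { assume "psi' (i-1) - psi (i-1) < 0"
      then show "psi' (cyc_dst k i) - psi (cyc_dst k i) < 0" using e c
        by (simp add: mult_pos_neg) }
  qed
next
  case False
  then have lt: "phi' i < phi i" using s by (auto simp: cyc_ind_def sgn_if split: if_splits)
  have tl: "head k fwd i = i - 1" "tail k fwd i = cyc_dst k i"
    using False by (auto simp: tail_def head_def cyc_src_def)
  show ?thesis
  proof (intro conjI impI)
    assume p: "pipe i"
    have "psi (cyc_dst k i) - psi (i-1) = c i * sgn (phi i) * (phi i)\<^sup>2"
         "psi' (cyc_dst k i) - psi' (i-1) = c i * sgn (phi' i) * (phi' i)\<^sup>2"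
      using A B p i tl unfolding admissible_def by auto
    with xabs_mono[OF lt c] show "psi' (cyc_dst k i) - psi (cyc_dst k i) < psi' (i-1) - psi (i-1)"
      by linarith
  next
    assume p: "\<not> pipe i"
    have "psi (i-1) = c i * psi (cyc_dst k i)" "psi' (i-1) = c i * psi' (cyc_dst k i)"
      using A B p i tl unfolding admissible_def by auto
    then have e: "psi' (i-1) - psi (i-1) = c i * (psi' (cyc_dst k i) - psi (cyc_dst k i))"
      by (simp add: right_diff_distrib)
    { assume a: "psi' (i-1) - psi (i-1) \<le> 0"
      show "psi' (cyc_dst k i) - psi (cyc_dst k i) \<le> 0"
      proof (rule ccontr)
        assume "\<not> ?thesis"
        then have "c i * (psi' (cyc_dst k i) - psi (cyc_dst k i)) > 0" using c by simp
        then show False using a e by simp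
      qed }
    { assume a: "psi' (i-1) - psi (i-1) < 0"
      show "psi' (cyc_dst k i) - psi (cyc_dst k i) < 0"
      proof (rule ccontr)
        assume "\<not> ?thesis"
        then have "c i * (psi' (cyc_dst k i) - psi (cyc_dst k i)) \<ge> 0" using c by simp
        then show False using a e by simp
      qed }
  qed
qed

lemma one_dir:
  assumes c: "\<forall>i\<in>{1..k+1}. c i > 0"
    and ex: "\<exists>i\<in>{1..k+1}. pipe i"
    and A: "admissible k fwd pipe c phi psi"
    and B: "admissible k fwd pipe c phi' psi'"
    and z: "psi 0 = psi' 0"
    and all: "\<forall>i\<in>{1..k+1}. sgn (phi' i - phi i) * cyc_ind fwd i > 0"
  shows False
proof -
  define D where "D j = psi' j - psi j" for j
  have st: "\<And>i. i \<in> {1..k+1} \<Longrightarrow> (pipe i \<longrightarrow> D (cyc_dst k i) < D (i-1))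
    \<and> (\<not> pipe i \<longrightarrow> (D (i-1) \<le> 0 \<longrightarrow> D (cyc_dst k i) \<le> 0) \<and> (D (i-1) < 0 \<longrightarrow> D (cyc_dst k i) < 0))"
    unfolding D_def using edge_step[OF _ _ A B] c all by blast
  have inv: "j \<le> k \<Longrightarrow> D j \<le> 0 \<and> ((\<exists>i\<in>{1..j}. pipe i) \<longrightarrow> D j < 0)" for j
  proof (induction j)
    case 0
    then show ?case using z by (simp add: D_def)
  next
    case (Suc j)
    have d: "cyc_dst k (Suc j) = Suc j" using Suc.prems by (simp add: cyc_dst_def)
    have s: "(pipe (Suc j) \<longrightarrow> D (Suc j) < D j)
      \<and> (\<not> pipe (Suc j) \<longrightarrow> (D j \<le> 0 \<longrightarrow> D (Suc j) \<le> 0) \<and> (D j < 0 \<longrightarrow> D (Suc j) < 0))"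
      using st[of "Suc j"] Suc.prems d by simp
    have IH: "D j \<le> 0 \<and> ((\<exists>i\<in>{1..j}. pipe i) \<longrightarrow> D j < 0)" using Suc by simp
    show ?case
    proof (cases "pipe (Suc j)")
      case True then show ?thesis using s IH by auto
    next
      case False
      have "(\<exists>i\<in>{1..Suc j}. pipe i) \<Longrightarrow> (\<exists>i\<in>{1..j}. pipe i)"
        using False by (metis atLeastAtMost_iff le_Suc_eq)
      then show ?thesis using s IH False by auto
    qed
  qed
  have ik: "D k \<le> 0 \<and> ((\<exists>i\<in>{1..k}. pipe i) \<longrightarrow> D k < 0)" using inv by simp
  have d: "cyc_dst k (k+1) = 0" by (simp add: cyc_dst_def)
  have s: "(pipe (k+1) \<longrightarrow> D 0 < D k)
      \<and> (\<not> pipe (k+1) \<longrightarrow> (D k \<le> 0 \<longrightarrow> D 0 \<le> 0) \<and> (D k < 0 \<longrightarrow> D 0 < 0))"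
    using st[of "k+1"] d by simp
  have D0: "D 0 = 0" using z by (simp add: D_def)
  show False
  proof (cases "pipe (k+1)")
    case True then show ?thesis using s ik D0 by auto
  next
    case False
    then have "\<exists>i\<in>{1..k}. pipe i" using ex by (metis atLeastAtMost_iff le_Suc_eq Suc_eq_plus1)
    then show ?thesis using s ik D0 False by auto
  qed
qed

theorem lemma2:
  fixes k :: nat
    and fwd pipe :: "nat \<Rightarrow> bool"
    and c :: "nat \<Rightarrow> real"
    and phi psi phi' psi' :: "nat \<Rightarrow> real"
  assumes "\<forall>i\<in>{1..k+1}. c i > 0"
    and "\<exists>i\<in>{1..k+1}. pipe i"
    and "admissible k fwd pipe c phi psi"
    and "admissible k fwd pipe c phi' psi'"
    and "psi 0 = psi' 0"
    and "\<exists>i\<in>{1..k+1}. phi' i \<noteq> phi i"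
  shows "\<not> (\<forall>i\<in>{1..k+1}. sgn (phi' i - phi i) * cyc_ind fwd i < 0) \<and>
         \<not> (\<forall>i\<in>{1..k+1}. sgn (phi' i - phi i) * cyc_ind fwd i > 0)"
proof
  show "\<not> (\<forall>i\<in>{1..k+1}. sgn (phi' i - phi i) * cyc_ind fwd i < 0)"
  proof
    assume h: "\<forall>i\<in>{1..k+1}. sgn (phi' i - phi i) * cyc_ind fwd i < 0"
    have "\<forall>i\<in>{1..k+1}. sgn (phi i - phi' i) * cyc_ind fwd i > 0"
    proof
      fix i assume "i \<in> {1..k+1}"
      then have "sgn (phi' i - phi i) * cyc_ind fwd i < 0" using h by blast
      moreover have "sgn (phi i - phi' i) = - sgn (phi' i - phi i)"
        by (metis minus_diff_eq sgn_minus)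
      ultimately show "sgn (phi i - phi' i) * cyc_ind fwd i > 0" by simp
    qed
    then show False using one_dir[OF assms(1,2,4,3)] assms(5) by simp
  qed
  show "\<not> (\<forall>i\<in>{1..k+1}. sgn (phi' i - phi i) * cyc_ind fwd i > 0)"
    using one_dir[OF assms(1-5)] by blast
qed

end
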